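(* Let $e^{-1}<p\leq 1$ and let $\bar Q=(\bar q_{j,k})_{j,k\geq1}$ be the generator on $\mathbb N=\{1,2,\dots\}$ with $\bar q_{j,k}=\binom{j-1}{k-1}p^k(1-p)^{j-k}$ for $1\leq k\leq j-1$, $\bar q_{j,j+1}=(j+1)p$, $\bar q_{j,j}=p^j-(2+j)p$, and $\bar q_{j,k}=0$ otherwise. Then the Markov chain with generator $\bar Q$ is transient. *)

theory Defs
  imports Complex_Main
begin

text \<open>The generator Qbar on the state space {1,2,...} (encoded as naturals \<ge> 1).\<close>
definition qbar :: "real \<Rightarrow> nat \<Rightarrow> nat \<Rightarrow> real" where
  "qbar p j k =
     (if 1 \<le> k \<and> k \<le> j - 1 then real ((j - 1) choose (k - 1)) * p ^ k * (1 - p) ^ (j - k)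
      else if k = j + 1 then real (j + 1) * p
      else if k = j then p ^ j - real (2 + j) * p
      else 0)"

text \<open>Jump (embedded) chain of a conservative generator Q: P(j,k) = q(j,k)/q(j) for k \<noteq> j,
  with absorbing convention when q(j) = 0.\<close>
definition jump_matrix :: "(nat \<Rightarrow> nat \<Rightarrow> real) \<Rightarrow> nat \<Rightarrow> nat \<Rightarrow> real" where
  "jump_matrix Q j k =
     (if Q j j = 0 then (if k = j then 1 else 0)
      else if k = j then 0 else Q j k / (- Q j j))"

text \<open>hit P i n x: probability, for the discrete chain with transition matrix P started at x,
  that the first visit to i happens exactly at step n.\<close>
primrec hit :: "(nat \<Rightarrow> nat \<Rightarrow> real) \<Rightarrow> nat \<Rightarrow> nat \<Rightarrow> nat \<Rightarrow> real" where
  "hit P i 0 x = (if x = i then 1 else 0)"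
| "hit P i (Suc n) x = (if x = i then 0 else (\<Sum>k. P x k * hit P i n k))"

text \<open>Return probability P_i(T_i < \<infinity>), T_i = inf{n \<ge> 1. X_n = i}.\<close>
definition return_prob :: "(nat \<Rightarrow> nat \<Rightarrow> real) \<Rightarrow> nat \<Rightarrow> real" where
  "return_prob P i = (\<Sum>n. \<Sum>k. P i k * hit P i n k)"

text \<open>A continuous-time chain with generator Q on {1,2,...} is transient iff every state is
  transient, i.e. (equivalently) transient for the jump chain: return probability < 1.\<close>
definition ctmc_transient :: "(nat \<Rightarrow> nat \<Rightarrow> real) \<Rightarrow> bool" where
  "ctmc_transient Q \<longleftrightarrow> (\<forall>i\<ge>1. return_prob (jump_matrix Q) i < 1)"

end

theory Submission imports Defs "HOL-Analysis.Analysis" begin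

definition Fm :: "nat \<Rightarrow> nat \<Rightarrow> real" where
  "Fm m n = integral {0..1} (\<lambda>v::real. (1 - v^m)^n)"

lemma Fm_has: "((\<lambda>v::real. (1 - v^m)^n) has_integral Fm m n) {0..1}"
  unfolding Fm_def
  by (intro integrable_integral integrable_continuous_interval continuous_intros)

lemma Fm_rec:
  assumes "m \<ge> 1"
  shows "Fm m (Suc n) * (real (Suc n) * m + 1) = real (Suc n) * m * Fm m n"
proof -
  define G where "G = (\<lambda>v::real. v * (1 - v^m)^(Suc n))"
  define G' where "G' = (\<lambda>v::real. (real (Suc n) * m + 1) * (1 - v^m)^(Suc n) - real (Suc n) * m * (1 - v^m)^n)"
  have d: "(G has_vector_derivative G' v) (at v within {0..1})" for v
  proof -
    have "(G has_real_derivative (1 * (1 - v^m)^(Suc n) + v * (real (Suc n) * (1 - v^m)^n * (0 - real m * v^(m-1))))) (at v within {0..1})"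
      unfolding G_def by (rule derivative_eq_intros refl | simp)+
    moreover have "1 * (1 - v^m)^(Suc n) + v * (real (Suc n) * (1 - v^m)^n * (0 - real m * v^(m-1))) = G' v"
    proof -
      obtain k where k: "m = Suc k" using assms by (cases m) auto
      show ?thesis unfolding G'_def k by (simp add: algebra_simps)
    qed
    ultimately show ?thesis by (simp add: has_real_derivative_iff_has_vector_derivative)
  qed
  have "(G' has_integral (G 1 - G 0)) {0..1}"
    by (rule fundamental_theorem_of_calculus) (auto intro: d)
  then have h0: "(G' has_integral 0) {0..1}" by (simp add: G_def)
  have h1: "(G' has_integral ((real (Suc n) * m + 1) * Fm m (Suc n) - real (Suc n) * m * Fm m n)) {0..1}"
    unfolding G'_def by (intro has_integral_diff has_integral_mult_right Fm_has)
  from has_integral_unique[OF h0 h1] show ?thesis by (simp add: algebra_simps)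
qed

lemma Fm_pos: assumes "m \<ge> 1" shows "Fm m n > 0"
proof (induction n)
  case 0
  have "Fm m 0 = 1" unfolding Fm_def by simp
  then show ?case by simp
next
  case (Suc n)
  have a: "real (Suc n) * m * Fm m n > 0"
    using Suc assms by (intro mult_pos_pos) auto
  have b0: "real (Suc n) * m \<ge> 0" by simp
  have b: "real (Suc n) * m + 1 > 0" using b0 by linarith
  have "Fm m (Suc n) = real (Suc n) * m * Fm m n / (real (Suc n) * m + 1)"
    using Fm_rec[OF assms, of n] b by (simp add: field_simps)
  then show ?case using a b by simp
qed

lemma Fm_scale:
  assumes "0 < c" "c \<le> 1"
  shows "integral {0..1} (\<lambda>v::real. (1 - (c * v)^m)^n) \<le> Fm m n / c"
proof -
  define f where "f = (\<lambda>t::real. (1 - t^m)^n)"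
  have hc: "(f has_integral integral {0..c} f) {0..c}"
    unfolding f_def by (intro integrable_integral integrable_continuous_interval continuous_intros)
  have img: "(\<lambda>x. x / c) ` {0..c} = {0..1}"
  proof
    show "(\<lambda>x. x / c) ` {0..c} \<subseteq> {0..1}" using assms by (auto simp: divide_simps)
    show "{0..1} \<subseteq> (\<lambda>x. x / c) ` {0..c}"
    proof
      fix y :: real assume "y \<in> {0..1}"
      then have "c * y \<in> {0..c}" "y = (c * y)/c" using assms by (auto simp: mult_le_cancel_left1)
      then show "y \<in> (\<lambda>x. x / c) ` {0..c}" by blast
    qed
  qed
  have hs: "((\<lambda>x. f (c * x)) has_integral (1 / c) * integral {0..c} f) {0..1}"
    using has_integral_stretch_real[OF hc, of c] assms img by simp
  have le: "integral {0..c} f \<le> Fm m n"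
  proof (rule has_integral_subset_le[OF _ hc])
    show "{0..c} \<subseteq> {0..1::real}" using assms by auto
    show "(f has_integral Fm m n) {0..1}" unfolding f_def by (rule Fm_has)
    show "\<forall>x\<in>{0..1}. 0 \<le> f x" unfolding f_def by (auto intro!: zero_le_power simp: power_le_one)
  qed
  have "integral {0..1} (\<lambda>v::real. (1 - (c * v)^m)^n) = (1 / c) * integral {0..c} f"
    using hs unfolding f_def by (simp add: integral_unique)
  also have "\<dots> \<le> Fm m n / c" using le assms by (simp add: divide_right_mono)
  finally show ?thesis .
qed

lemma Fm_binom:
  "(\<Sum>j\<le>n. real (n choose j) * p^j * (1-p)^(n-j) * Fm m j) = integral {0..1} (\<lambda>v::real. (1 - p * v^m)^n)"
proof -
  have pt: "(\<Sum>j\<le>n. real (n choose j) * p^j * (1-p)^(n-j) * (1 - v^m)^j) = (1 - p * v^m)^n" for v :: real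
  proof -
    have "(1 - p * v^m)^n = (p*(1 - v^m) + (1-p))^n" by (simp add: algebra_simps)
    also have "\<dots> = (\<Sum>j\<le>n. real (n choose j) * (p*(1 - v^m))^j * (1-p)^(n-j))"
      by (simp add: binomial_ring)
    also have "\<dots> = (\<Sum>j\<le>n. real (n choose j) * p^j * (1-p)^(n-j) * (1 - v^m)^j)"
      by (intro sum.cong refl) (simp add: power_mult_distrib ac_simps)
    finally show ?thesis by simp
  qed
  have "((\<lambda>v. \<Sum>j\<le>n. real (n choose j) * p^j * (1-p)^(n-j) * (1 - v^m)^j) has_integral
        (\<Sum>j\<le>n. real (n choose j) * p^j * (1-p)^(n-j) * Fm m j)) {0..1}"
    by (intro has_integral_sum finite_atMost has_integral_mult_right Fm_has)
  then show ?thesis unfolding pt by (simp add: integral_unique)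
qed

lemma qpos:
  assumes "0 < p" "p \<le> 1" "x \<ge> 1"
  shows "real (2 + x) * p - p ^ x > 0"
proof -
  have "p ^ x \<le> p" using power_decreasing[of 1 x p] assms by simp
  moreover have "real (2 + x) * p \<ge> 3 * p" using assms by (intro mult_right_mono) auto
  ultimately show ?thesis using assms by linarith
qed

lemma P_eq:
  assumes "0 < p" "p \<le> 1" "x \<ge> 1"
  shows "jump_matrix (qbar p) x k = (if k = x then 0 else qbar p x k / (real (2 + x) * p - p ^ x))"
proof -
  have e: "- qbar p x x = real (2 + x) * p - p ^ x" using assms unfolding qbar_def by auto
  then have "qbar p x x \<noteq> 0" using qpos[OF assms] by auto
  then have "jump_matrix (qbar p) x k = (if k = x then 0 else qbar p x k / (- qbar p x x))"
    unfolding jump_matrix_def by simp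
  then show ?thesis unfolding e .
qed

lemma P_nonneg:
  assumes "0 < p" "p \<le> 1" "x \<ge> 1"
  shows "jump_matrix (qbar p) x k \<ge> 0"
proof -
  have "qbar p x k \<ge> 0" if "k \<noteq> x"
    using that assms unfolding qbar_def by auto
  then show ?thesis unfolding P_eq[OF assms] using qpos[OF assms] by auto
qed

lemma P_zero:
  assumes "0 < p" "p \<le> 1" "x \<ge> 1" "k = 0 \<or> k \<ge> x + 2"
  shows "jump_matrix (qbar p) x k = 0"
  unfolding P_eq[OF assms(1-3)] using assms unfolding qbar_def by auto

lemma suminf_P:
  assumes "0 < p" "p \<le> 1" "x \<ge> 1"
  shows "(\<Sum>k. jump_matrix (qbar p) x k * a k) = (\<Sum>k<x+2. jump_matrix (qbar p) x k * a k)"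
  by (rule suminf_finite) (auto simp: P_zero[OF assms])

lemma arith_key_real:
  fixes N M :: real
  assumes "M \<ge> 2" "N \<ge> 0"
  shows "(M + 1) / M + (N+2) * ((N+1) * M / ((N+1) * M + 1)) < N + 3"
proof -
  define A where "A = (N+1) * M"
  have A0: "A \<ge> 0" unfolding A_def using assms by simp
  have e1: "(M + 1) / M = 1 + 1 / M" using assms by (simp add: field_simps)
  have e2: "(N+2) * (A / (A + 1)) = (N+2) - (N+2) / (A+1)" using A0 by (simp add: field_simps)
  have "A + 1 < (N+2) * M" unfolding A_def using assms by (simp add: algebra_simps)
  then have "1 / M < (N+2) / (A+1)" using assms A0 by (simp add: field_simps)
  then show ?thesis unfolding A_def[symmetric] e1 e2 by simp
qed

lemma arith_key:
  fixes n m :: nat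
  assumes "m \<ge> 2"
  shows "(real m + 1) / m + real (n+2) * (real (n+1) * m / (real (n+1) * m + 1)) < real n + 3"
  using arith_key_real[of "real m" "real n"] assms by (simp add: algebra_simps)

lemma aux_le: "(a::real) - b = c - d \<Longrightarrow> d \<le> c \<Longrightarrow> b \<le> a" by linarith

lemma super:
  fixes m :: nat
  assumes p0: "0 < p" and p1: "p \<le> 1" and m2: "m \<ge> 2" and pc: "(real m / (real m + 1)) ^ m \<le> p"
    and x1: "x \<ge> 1"
  shows "(\<Sum>k<x+2. jump_matrix (qbar p) x k * Fm m (k - 1)) < Fm m (x - 1)"
proof -
  obtain n where xn: "x = Suc n" using x1 by (cases x) auto
  define q where "q = real (2 + x) * p - p ^ x"
  have q0: "q > 0" unfolding q_def using qpos[OF p0 p1 x1] .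
  define P where "P = jump_matrix (qbar p)"
  define g where "g = (\<lambda>k. P x k * Fm m (k - 1))"
  have g0: "g 0 = 0" unfolding g_def P_def using P_zero[OF p0 p1 x1] by simp
  have gx: "g x = 0" unfolding g_def P_def P_eq[OF p0 p1 x1] by simp
  have gup: "g (Suc x) = real (Suc x) * p / q * Fm m (Suc n)"
    unfolding g_def P_def P_eq[OF p0 p1 x1] q_def using xn by (simp add: qbar_def)
  have gdown: "g (Suc j) = real (n choose j) * p ^ Suc j * (1-p)^(n-j) / q * Fm m j" if "j < n" for j
    unfolding g_def P_def P_eq[OF p0 p1 x1] q_def using xn that by (simp add: qbar_def)
  have "(\<Sum>k<x+2. g k) = (\<Sum>k<Suc n. g k) + g x + g (Suc x)"
    using xn by simp
  also have "(\<Sum>k<Suc n. g k) = g 0 + (\<Sum>j<n. g (Suc j))" by (rule sum.lessThan_Suc_shift)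
  also have "(\<Sum>j<n. g (Suc j)) = (\<Sum>j<n. real (n choose j) * p ^ Suc j * (1-p)^(n-j) / q * Fm m j)"
    by (rule sum.cong) (auto simp: gdown)
  finally have sumeq: "(\<Sum>k<x+2. g k) = ((\<Sum>j<n. real (n choose j) * p ^ Suc j * (1-p)^(n-j) * Fm m j)
        + real (Suc x) * p * Fm m (Suc n)) / q"
    using g0 gx gup by (simp add: sum_divide_distrib add_divide_distrib)
  define S where "S = (\<Sum>j\<le>n. real (n choose j) * p^j * (1-p)^(n-j) * Fm m j)"
  have Sdown: "(\<Sum>j<n. real (n choose j) * p ^ Suc j * (1-p)^(n-j) * Fm m j) = p * (S - p ^ n * Fm m n)"
  proof -
    have "S = (\<Sum>j<n. real (n choose j) * p^j * (1-p)^(n-j) * Fm m j) + p ^ n * Fm m n"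
      unfolding S_def by (simp add: lessThan_Suc_atMost[symmetric])
    then show ?thesis by (simp add: sum_distrib_left algebra_simps)
  qed
  define c where "c = real m / (real m + 1)"
  have c0: "0 < c" "c \<le> 1" unfolding c_def using m2 by auto
  have "S = integral {0..1} (\<lambda>v::real. (1 - p * v^m)^n)" unfolding S_def by (rule Fm_binom)
  also have "\<dots> \<le> integral {0..1} (\<lambda>v::real. (1 - (c * v)^m)^n)"
  proof (rule integral_le)
    show "(\<lambda>v::real. (1 - p * v^m)^n) integrable_on {0..1}"
      by (intro integrable_continuous_interval continuous_intros)
    show "(\<lambda>v::real. (1 - (c * v)^m)^n) integrable_on {0..1}"
      by (intro integrable_continuous_interval continuous_intros)
    fix v :: real assume v: "v \<in> {0..1}"
    have vm: "0 \<le> v^m" "v^m \<le> 1" using v by (auto simp: power_le_one)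
    have "p * v^m \<le> 1" using vm p1 p0 by (simp add: mult_le_one)
    moreover have "c^m * v^m \<le> p * v^m" using pc vm unfolding c_def by (intro mult_right_mono) auto
    ultimately show "(1 - p * v^m)^n \<le> (1 - (c * v)^m)^n"
      by (intro power_mono) (auto simp: power_mult_distrib)
  qed
  also have "\<dots> \<le> Fm m n / c" by (rule Fm_scale[OF c0])
  finally have Sle: "S \<le> Fm m n * ((real m + 1) / m)" unfolding c_def using m2 by simp
  have F0: "Fm m n > 0" using Fm_pos m2 by simp
  have rec: "Fm m (Suc n) = real (n+1) * m / (real (n+1) * m + 1) * Fm m n"
  proof -
    have "real (n+1) * m \<ge> 0" by simp
    then have d0: "real (n+1) * m + 1 > 0" by linarith
    show ?thesis using Fm_rec[of m n] m2 d0 by (simp add: field_simps)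
  qed
  have "p * (S - p ^ n * Fm m n) + real (Suc x) * p * Fm m (Suc n)
      \<le> p * Fm m n * ((real m + 1) / m - p ^ n + real (n+2) * (real (n+1) * m / (real (n+1) * m + 1)))"
  proof -
    have pS: "p * S \<le> p * (Fm m n * ((real m + 1) / m))" using Sle p0 by (intro mult_left_mono) auto
    have "p * Fm m n * ((real m + 1) / m - p ^ n + real (n+2) * (real (n+1) * m / (real (n+1) * m + 1)))
       - (p * (S - p ^ n * Fm m n) + real (Suc x) * p * (real (n+1) * m / (real (n+1) * m + 1) * Fm m n))
       = p * (Fm m n * ((real m + 1) / m)) - p * S"
      using xn by (simp add: algebra_simps)
    from aux_le[OF this pS] show ?thesis unfolding rec .
  qed
  also have "\<dots> < p * Fm m n * (real n + 3 - p ^ n)"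
    using arith_key[OF m2, of n] p0 F0 by (intro mult_strict_left_mono) auto
  also have "\<dots> = q * Fm m n" unfolding q_def xn by (simp add: algebra_simps)
  finally have main: "p * (S - p ^ n * Fm m n) + real (Suc x) * p * Fm m (Suc n) < q * Fm m n" .
  have "(\<Sum>k<x+2. g k) < Fm m n"
    unfolding sumeq Sdown using main q0 by (simp add: divide_less_eq algebra_simps)
  then show ?thesis unfolding g_def P_def xn by simp
qed

lemma hit_nonneg:
  assumes p0: "0 < p" and p1: "p \<le> 1"
  shows "x \<ge> 1 \<Longrightarrow> hit (jump_matrix (qbar p)) i n x \<ge> 0"
proof (induction n arbitrary: x)
  case 0
  then show ?case by simp
next
  case (Suc n)
  have "(\<Sum>k<x+2. jump_matrix (qbar p) x k * hit (jump_matrix (qbar p)) i n k) \<ge> 0"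
  proof (rule sum_nonneg)
    fix k assume "k \<in> {..<x+2}"
    show "jump_matrix (qbar p) x k * hit (jump_matrix (qbar p)) i n k \<ge> 0"
    proof (cases "k = 0")
      case True then show ?thesis using P_zero[OF p0 p1 Suc.prems] by simp
    next
      case False then show ?thesis using P_nonneg[OF p0 p1 Suc.prems] Suc.IH[of k] by simp
    qed
  qed
  then show ?case using suminf_P[OF p0 p1 Suc.prems] by simp
qed

lemma H_bound:
  fixes m :: nat
  assumes p0: "0 < p" and p1: "p \<le> 1" and m2: "m \<ge> 2" and pc: "(real m / (real m + 1)) ^ m \<le> p"
    and i1: "i \<ge> 1"
  shows "x \<ge> 1 \<Longrightarrow> (\<Sum>t<N. hit (jump_matrix (qbar p)) i t x) \<le> Fm m (x - 1) / Fm m (i - 1)"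
proof (induction N arbitrary: x)
  case 0
  have "Fm m (x - 1) > 0" "Fm m (i - 1) > 0" using Fm_pos m2 by auto
  then show ?case by simp
next
  case (Suc N)
  define P where "P = jump_matrix (qbar p)"
  define f where "f = (\<lambda>k. Fm m (k - 1))"
  have fpos: "f k > 0" for k unfolding f_def using Fm_pos m2 by auto
  have "(\<Sum>t<Suc N. hit P i t x) = hit P i 0 x + (\<Sum>t<N. hit P i (Suc t) x)"
    by (rule sum.lessThan_Suc_shift)
  show ?case
  proof (cases "x = i")
    case True
    have "(\<Sum>t<Suc N. hit P i t x) = 1"
      unfolding sum.lessThan_Suc_shift using True by simp
    then show ?thesis using True fpos[of i] unfolding P_def f_def by simp
  next
    case False
    have "(\<Sum>t<Suc N. hit P i t x) = (\<Sum>t<N. \<Sum>k<x+2. P x k * hit P i t k)"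
      unfolding sum.lessThan_Suc_shift using False suminf_P[OF p0 p1 Suc.prems] unfolding P_def by simp
    also have "\<dots> = (\<Sum>k<x+2. P x k * (\<Sum>t<N. hit P i t k))"
      by (subst sum.swap) (simp add: sum_distrib_left)
    also have "\<dots> \<le> (\<Sum>k<x+2. P x k * (f k / f i))"
    proof (rule sum_mono)
      fix k assume "k \<in> {..<x+2}"
      show "P x k * (\<Sum>t<N. hit P i t k) \<le> P x k * (f k / f i)"
      proof (cases "k = 0")
        case True then show ?thesis using P_zero[OF p0 p1 Suc.prems] unfolding P_def by simp
      next
        case False then show ?thesis using P_nonneg[OF p0 p1 Suc.prems] Suc.IH[of k]
          unfolding P_def f_def by (intro mult_left_mono) auto
      qed
    qed
    also have "\<dots> = (\<Sum>k<x+2. P x k * f k) / f i"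
      by (simp only: times_divide_eq_right sum_divide_distrib)
    also have "\<dots> \<le> f x / f i"
      using super[OF p0 p1 m2 pc Suc.prems] fpos[of i] unfolding P_def f_def
      by (intro divide_right_mono) auto
    finally show ?thesis unfolding P_def f_def .
  qed
qed

lemma exists_m:
  assumes "exp (-1) < p" "p \<le> 1"
  obtains m :: nat where "m \<ge> 2" "(real m / (real m + 1)) ^ m \<le> p"
proof -
  have lim: "(\<lambda>n. (1 + 1 / real n) ^ n) \<longlonglongrightarrow> exp 1"
    using tendsto_exp_limit_sequentially[of 1] by simp
  have p0: "p > 0" using assms(1) by (meson exp_gt_zero less_trans)
  have "exp (-1) * exp 1 = (1::real)" by (simp add: exp_minus)
  then have "1 < p * exp 1" using assms(1) by (metis exp_gt_zero mult_strict_right_mono)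
  then have lt: "1 / p < exp 1" using p0 by (simp add: divide_less_eq mult.commute)
  have "eventually (\<lambda>n. 1 / p < (1 + 1 / real n) ^ n \<and> 2 \<le> n) sequentially"
    using order_tendstoD(1)[OF lim lt] eventually_ge_at_top[of 2] by (rule eventually_conj)
  then obtain m where m: "1 / p < (1 + 1 / real m) ^ m" "2 \<le> m"
    by (auto simp: eventually_sequentially)
  define A where "A = (1 + 1 / real m) ^ m"
  have "1 + 1 / real m > 0" by (simp add: add_pos_nonneg)
  then have A0: "A > 0" unfolding A_def by simp
  have "real m / (real m + 1) = 1 / (1 + 1 / real m)" using m(2) by (simp add: field_simps)
  then have e: "(real m / (real m + 1)) ^ m = 1 / A" unfolding A_def by (simp add: power_one_over)
  have "1 < A * p" using m(1) p0 unfolding A_def[symmetric] by (simp add: divide_less_eq)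
  then have "1 / A < p" using A0 by (simp add: divide_less_eq mult.commute)
  then show ?thesis using that[OF m(2)] e by simp
qed

theorem proposition8:
  fixes p :: real
  assumes "exp (-1) < p" and "p \<le> 1"
  shows "ctmc_transient (qbar p)"
proof -
  have p0: "p > 0" using assms(1) by (meson exp_gt_zero less_trans)
  have p1: "p \<le> 1" by fact
  obtain m :: nat where m2: "m \<ge> 2" and pc: "(real m / (real m + 1)) ^ m \<le> p"
    using exists_m[OF assms] by blast
  define P where "P = jump_matrix (qbar p)"
  define f where "f = (\<lambda>k. Fm m (k - 1))"
  have fpos: "f k > 0" for k unfolding f_def using Fm_pos m2 by auto
  show ?thesis unfolding ctmc_transient_def
  proof (intro allI impI)
    fix i :: nat assume i1: "i \<ge> 1"
    define a where "a = (\<lambda>n. \<Sum>k. P i k * hit P i n k)"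
    have a_eq: "a n = (\<Sum>k<i+2. P i k * hit P i n k)" for n
      unfolding a_def P_def by (rule suminf_P[OF p0 p1 i1])
    have a0: "a n \<ge> 0" for n
      unfolding a_eq
    proof (rule sum_nonneg)
      fix k assume "k \<in> {..<i+2}"
      show "P i k * hit P i n k \<ge> 0"
      proof (cases "k = 0")
        case True then show ?thesis using P_zero[OF p0 p1 i1] unfolding P_def by simp
      next
        case False then show ?thesis using P_nonneg[OF p0 p1 i1] hit_nonneg[OF p0 p1, of k i n]
          unfolding P_def by simp
      qed
    qed
    define B where "B = (\<Sum>k<i+2. P i k * f k) / f i"
    have B1: "B < 1"
      unfolding B_def using super[OF p0 p1 m2 pc i1] fpos[of i] unfolding P_def f_def by simp
    have part: "(\<Sum>n<N. a n) \<le> B" for N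
    proof -
      have "(\<Sum>n<N. a n) = (\<Sum>k<i+2. P i k * (\<Sum>n<N. hit P i n k))"
        unfolding a_eq by (subst sum.swap) (simp add: sum_distrib_left)
      also have "\<dots> \<le> (\<Sum>k<i+2. P i k * (f k / f i))"
      proof (rule sum_mono)
        fix k assume "k \<in> {..<i+2}"
        show "P i k * (\<Sum>n<N. hit P i n k) \<le> P i k * (f k / f i)"
        proof (cases "k = 0")
          case True then show ?thesis using P_zero[OF p0 p1 i1] unfolding P_def by simp
        next
          case False then show ?thesis using P_nonneg[OF p0 p1 i1] H_bound[OF p0 p1 m2 pc i1, of k N]
            unfolding P_def f_def by (intro mult_left_mono) auto
        qed
      qed
      also have "\<dots> = B" unfolding B_def
        by (simp only: times_divide_eq_right sum_divide_distrib)
      finally show ?thesis .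
    qed
    have "summable a" by (rule summableI_nonneg_bounded[OF a0 part])
    then have "suminf a \<le> B" by (rule suminf_le_const[OF _ part])
    then show "return_prob (jump_matrix (qbar p)) i < 1"
      using B1 unfolding return_prob_def a_def P_def by simp
  qed
qed

end
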